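(* Let $(M,K)$ be a Cartan space, let $v:[0,\infty)\to\mathbb{R}$ be smooth and let $\alpha,\beta$ be real constants with $\alpha,\beta>0$ and $\alpha+2\tau v(\tau)>0$ on $T^*M_0$, where $\tau=\frac12K^2$. Let $G=G_{ij}dx^idx^j+G^{ij}\delta p_i\delta p_j$ with $G_{ij}=\frac{1}{\beta}g_{ij}+\frac{v(\tau)}{\alpha\beta}p_ip_j$ and $G^{ij}=\beta g^{ij}-\frac{v\beta}{\alpha+2\tau v}p^ip^j$, and let $J$ be defined by $J(\delta_i)=G_{ik}\dot\partial^k$, $J(\dot\partial^i)=-G^{ik}\delta_k$. Then $(T^*M_0,G,J)$ is an almost K\"ahler manifold, i.e. $J^2=-I$, $G(JX,JY)=G(X,Y)$ for all vector fields $X,Y$, and the fundamental 2-form $\theta(X,Y)=G(X,JY)$ is closed.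
   Context: $M$ is an $n$-dimensional smooth manifold, $T^*M$ its cotangent bundle with local coordinates $(x^i,p_i)$, $T^*M_0=T^*M\setminus\{0\}$; $\partial_i=\partial/\partial x^i$, $\dot\partial^i=\partial/\partial p_i$; summation convention. A Cartan structure is $K:T^*M\to[0,\infty)$, smooth on $T^*M_0$, with $K(x,\lambda p)=\lambda K(x,p)$ for $\lambda>0$, such that $g^{ij}=\frac12\dot\partial^i\dot\partial^jK^2$ is positive definite on $T^*M_0$; $(g_{ij})$ is its inverse and $p^i=g^{ij}p_j$. Let $\gamma^i_{jk}=\frac12g^{is}(\partial_kg_{js}+\partial_jg_{sk}-\partial_sg_{jk})$, $\gamma^0_{jk}=\gamma^i_{jk}p_i$, $\gamma^0_{h0}=\gamma^i_{hk}p_ip^k$, and $N_{ij}=\gamma^0_{ij}-\frac12\gamma^0_{h0}\dot\partial^hg_{ij}$. Put $\delta_i=\partial_i+N_{ij}\dot\partial^j$ and $\delta p_i=dp_i-N_{ji}dx^j$; $(\delta_i,\dot\partial^i)$ is a local frame on $T^*M_0$ with dual coframe $(dx^i,\delta p_i)$. *)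

theory Defs
  imports "HOL-Analysis.Analysis"
begin

(* Local (single chart) model: M is represented by an open coordinate domain U in R^n,
   T*U has coordinates (x,p) in R^n x R^n, a tangent vector to T*U at (x,p) is an element
   (a,b) of R^n x R^n, meaning a^i d/dx^i + b_i d/dp_i. *)

type_synonym 'n pt = "(real^'n) \<times> (real^'n)"

definition pd :: "('a::real_normed_vector \<Rightarrow> real) \<Rightarrow> 'a \<Rightarrow> 'a \<Rightarrow> real" where
  "pd f u z = frechet_derivative f (at z) u"

fun iter_pd :: "'a list \<Rightarrow> ('a::real_normed_vector \<Rightarrow> real) \<Rightarrow> 'a \<Rightarrow> real" where
  "iter_pd [] f = f"
| "iter_pd (u # us) f = pd (iter_pd us f) u"

definition smooth_on :: "'a set \<Rightarrow> ('a::real_normed_vector \<Rightarrow> real) \<Rightarrow> bool" where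
  "smooth_on S f \<longleftrightarrow> (\<forall>us. \<forall>z\<in>S. iter_pd us f differentiable (at z))"

definition smooth_on_halfline :: "(real \<Rightarrow> real) \<Rightarrow> bool" where
  "smooth_on_halfline v \<longleftrightarrow>
     (\<exists>w S. open S \<and> {0..} \<subseteq> S \<and> smooth_on S w \<and> (\<forall>t\<ge>0. w t = v t))"

definition dxv :: "'n::finite \<Rightarrow> 'n pt" where "dxv i = (axis i 1, 0)"
definition dpv :: "'n::finite \<Rightarrow> 'n pt" where "dpv i = (0, axis i 1)"

definition T0 :: "(real^'n) set \<Rightarrow> 'n pt set" where
  "T0 U = {z. fst z \<in> U \<and> snd z \<noteq> 0}"

definition ginvK :: "('n::finite pt \<Rightarrow> real) \<Rightarrow> 'n \<Rightarrow> 'n \<Rightarrow> 'n pt \<Rightarrow> real" where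
  "ginvK K i j z = (1/2) * pd (pd (\<lambda>w. (K w)^2) (dpv j)) (dpv i) z"

definition cartan_structure :: "(real^'n::finite) set \<Rightarrow> ('n pt \<Rightarrow> real) \<Rightarrow> bool" where
  "cartan_structure U K \<longleftrightarrow> open U
     \<and> (\<forall>x\<in>U. \<forall>p. K (x, p) \<ge> 0)
     \<and> smooth_on (T0 U) K
     \<and> (\<forall>x\<in>U. \<forall>p. \<forall>l>0. K (x, l *\<^sub>R p) = l * K (x, p))
     \<and> (\<forall>z\<in>T0 U. \<forall>\<xi>::real^'n. \<xi> \<noteq> 0 \<longrightarrow> (\<Sum>i\<in>UNIV. \<Sum>j\<in>UNIV. ginvK K i j z * \<xi>$i * \<xi>$j) > 0)"

definition gK :: "('n::finite pt \<Rightarrow> real) \<Rightarrow> 'n \<Rightarrow> 'n \<Rightarrow> 'n pt \<Rightarrow> real" where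
  "gK K i j z = matrix_inv (\<chi> a b. ginvK K a b z) $ i $ j"

definition pup :: "('n::finite pt \<Rightarrow> real) \<Rightarrow> 'n \<Rightarrow> 'n pt \<Rightarrow> real" where
  "pup K i z = (\<Sum>j\<in>UNIV. ginvK K i j z * snd z $ j)"

definition tauK :: "('n::finite pt \<Rightarrow> real) \<Rightarrow> 'n pt \<Rightarrow> real" where
  "tauK K z = (K z)^2 / 2"

definition gam :: "('n::finite pt \<Rightarrow> real) \<Rightarrow> 'n \<Rightarrow> 'n \<Rightarrow> 'n \<Rightarrow> 'n pt \<Rightarrow> real" where
  "gam K i j k z = (1/2) * (\<Sum>s\<in>UNIV. ginvK K i s z *
      (pd (gK K j s) (dxv k) z + pd (gK K s k) (dxv j) z - pd (gK K j k) (dxv s) z))"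

definition gam0 :: "('n::finite pt \<Rightarrow> real) \<Rightarrow> 'n \<Rightarrow> 'n \<Rightarrow> 'n pt \<Rightarrow> real" where
  "gam0 K j k z = (\<Sum>i\<in>UNIV. gam K i j k z * snd z $ i)"

definition gam0h0 :: "('n::finite pt \<Rightarrow> real) \<Rightarrow> 'n \<Rightarrow> 'n pt \<Rightarrow> real" where
  "gam0h0 K h z = (\<Sum>i\<in>UNIV. \<Sum>k\<in>UNIV. gam K i h k z * snd z $ i * pup K k z)"

definition NK :: "('n::finite pt \<Rightarrow> real) \<Rightarrow> 'n \<Rightarrow> 'n \<Rightarrow> 'n pt \<Rightarrow> real" where
  "NK K i j z = gam0 K i j z - (1/2) * (\<Sum>h\<in>UNIV. gam0h0 K h z * pd (gK K i j) (dpv h) z)"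

text \<open>delta_i = d_i + N_ij dot-d^j, as a coordinate tangent vector\<close>
definition deltav :: "('n::finite pt \<Rightarrow> real) \<Rightarrow> 'n pt \<Rightarrow> 'n \<Rightarrow> 'n pt" where
  "deltav K z i = (axis i 1, \<chi> j. NK K i j z)"

text \<open>dual coframe dx^i and delta p_i = dp_i - N_ji dx^j evaluated on a tangent vector X\<close>
definition dxc :: "'n::finite pt \<Rightarrow> 'n \<Rightarrow> real" where "dxc X i = fst X $ i"
definition dpc :: "('n::finite pt \<Rightarrow> real) \<Rightarrow> 'n pt \<Rightarrow> 'n pt \<Rightarrow> 'n \<Rightarrow> real" where
  "dpc K z X i = snd X $ i - (\<Sum>j\<in>UNIV. NK K j i z * fst X $ j)"

definition Glow :: "('n::finite pt \<Rightarrow> real) \<Rightarrow> (real \<Rightarrow> real) \<Rightarrow> real \<Rightarrow> real \<Rightarrow> 'n \<Rightarrow> 'n \<Rightarrow> 'n pt \<Rightarrow> real" where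
  "Glow K v \<alpha> \<beta> i j z = gK K i j z / \<beta> + v (tauK K z) / (\<alpha> * \<beta>) * snd z $ i * snd z $ j"

definition Gup :: "('n::finite pt \<Rightarrow> real) \<Rightarrow> (real \<Rightarrow> real) \<Rightarrow> real \<Rightarrow> real \<Rightarrow> 'n \<Rightarrow> 'n \<Rightarrow> 'n pt \<Rightarrow> real" where
  "Gup K v \<alpha> \<beta> i j z = \<beta> * ginvK K i j z
     - v (tauK K z) * \<beta> / (\<alpha> + 2 * tauK K z * v (tauK K z)) * pup K i z * pup K j z"

definition Gmet :: "('n::finite pt \<Rightarrow> real) \<Rightarrow> (real \<Rightarrow> real) \<Rightarrow> real \<Rightarrow> real \<Rightarrow> 'n pt \<Rightarrow> 'n pt \<Rightarrow> 'n pt \<Rightarrow> real" where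
  "Gmet K v \<alpha> \<beta> z X Y =
     (\<Sum>i\<in>UNIV. \<Sum>j\<in>UNIV. Glow K v \<alpha> \<beta> i j z * dxc X i * dxc Y j)
   + (\<Sum>i\<in>UNIV. \<Sum>j\<in>UNIV. Gup K v \<alpha> \<beta> i j z * dpc K z X i * dpc K z Y j)"

definition Jmap :: "('n::finite pt \<Rightarrow> real) \<Rightarrow> (real \<Rightarrow> real) \<Rightarrow> real \<Rightarrow> real \<Rightarrow> 'n pt \<Rightarrow> 'n pt \<Rightarrow> 'n pt" where
  "Jmap K v \<alpha> \<beta> z X =
     (\<Sum>k\<in>UNIV. (\<Sum>i\<in>UNIV. dxc X i * Glow K v \<alpha> \<beta> i k z) *\<^sub>R dpv k)
   + (\<Sum>k\<in>UNIV. (- (\<Sum>i\<in>UNIV. dpc K z X i * Gup K v \<alpha> \<beta> i k z)) *\<^sub>R deltav K z k)"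

definition theta :: "('n::finite pt \<Rightarrow> real) \<Rightarrow> (real \<Rightarrow> real) \<Rightarrow> real \<Rightarrow> real \<Rightarrow> 'n pt \<Rightarrow> 'n pt \<Rightarrow> 'n pt \<Rightarrow> real" where
  "theta K v \<alpha> \<beta> z X Y = Gmet K v \<alpha> \<beta> z X (Jmap K v \<alpha> \<beta> z Y)"

end

theory Submission
  imports Defs "HOL-Library.Product_Plus"
begin

lemma dir_deriv:
  fixes F :: "'a::real_normed_vector \<Rightarrow> real"
  assumes "F differentiable (at (w + s *\<^sub>R a))"
  shows "((\<lambda>s. F (w + s *\<^sub>R a)) has_real_derivative pd F a (w + s *\<^sub>R a)) (at s)"
proof -
  let ?y = "w + s *\<^sub>R a"
  have F: "(F has_derivative frechet_derivative F (at ?y)) (at ?y)"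
    using assms frechet_derivative_works by blast
  have lin: "linear (frechet_derivative F (at ?y))"
    using F has_derivative_linear by blast
  have L: "((\<lambda>s. w + s *\<^sub>R a) has_derivative (\<lambda>s. s *\<^sub>R a)) (at s)"
    by (auto intro!: derivative_eq_intros)
  have "((F \<circ> (\<lambda>s. w + s *\<^sub>R a)) has_derivative (frechet_derivative F (at ?y) \<circ> (\<lambda>s. s *\<^sub>R a))) (at s)"
    by (rule diff_chain_at[OF L]) (use F in simp)
  moreover have "(frechet_derivative F (at ?y) \<circ> (\<lambda>s. s *\<^sub>R a)) = (\<lambda>t. pd F a ?y * t)"
    using linear.scaleR[OF lin] by (auto simp: pd_def fun_eq_iff)
  ultimately show ?thesis
    by (simp add: has_field_derivative_def o_def)
qed

lemma pd_local:
  assumes "open S" "z \<in> S" "\<And>w. w \<in> S \<Longrightarrow> f w = g w"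
  shows "pd f u z = pd g u z"
proof -
  have "(f has_derivative D) (at z) \<longleftrightarrow> (g has_derivative D) (at z)" for D
    using has_derivative_transform_within_open[of f D z UNIV S g]
      has_derivative_transform_within_open[of g D z UNIV S f] assms by auto
  then show ?thesis unfolding pd_def frechet_derivative_def by simp
qed

lemma pd_const_local:
  assumes "open S" "z \<in> S" "\<And>w. w \<in> S \<Longrightarrow> f w = c"
  shows "pd f u z = 0"
proof -
  have "pd f u z = pd (\<lambda>_. c) u z" by (rule pd_local[OF assms])
  also have "frechet_derivative (\<lambda>_::'a. c) (at z) = (\<lambda>_. 0)"
    by (rule frechet_derivative_at[symmetric]) simp
  then have "pd (\<lambda>_. c) u z = 0" by (simp add: pd_def)
  finally show ?thesis .
qed

lemma pd_unique:
  fixes F :: "'a::real_normed_vector \<Rightarrow> real"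
  assumes "F differentiable (at z)"
    and "((\<lambda>t. F (z + t *\<^sub>R u)) has_real_derivative D) (at 0)"
  shows "pd F u z = D"
proof -
  have "((\<lambda>t. F (z + t *\<^sub>R u)) has_real_derivative pd F u (z + 0 *\<^sub>R u)) (at 0)"
    by (rule dir_deriv) (use assms in simp)
  then show ?thesis using assms(2) DERIV_unique by fastforce
qed

lemma pd_linear:
  fixes F :: "'a::real_normed_vector \<Rightarrow> real"
  assumes "F differentiable (at z)" "finite I"
  shows "pd F (\<Sum>i\<in>I. c i *\<^sub>R e i) z = (\<Sum>i\<in>I. c i * pd F (e i) z)"
proof -
  have "linear (frechet_derivative F (at z))"
    using assms frechet_derivative_works has_derivative_linear by blast
  then show ?thesis unfolding pd_def
    by (simp add: linear_sum linear.scaleR)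
qed

lemma pd_sumfun:
  fixes F :: "'i \<Rightarrow> 'a::real_normed_vector \<Rightarrow> real"
  assumes "\<And>j. j \<in> I \<Longrightarrow> F j differentiable (at z)" "finite I"
  shows "pd (\<lambda>w. \<Sum>j\<in>I. c j * F j w) u z = (\<Sum>j\<in>I. c j * pd (F j) u z)"
proof -
  have "((\<lambda>w. \<Sum>j\<in>I. c j * F j w) has_derivative (\<lambda>h. \<Sum>j\<in>I. c j * frechet_derivative (F j) (at z) h)) (at z)"
    using assms by (auto intro!: derivative_eq_intros frechet_derivative_works[THEN iffD1])
  then show ?thesis unfolding pd_def using frechet_derivative_at by metis
qed

lemma pd_mult:
  fixes f g :: "'a::real_normed_vector \<Rightarrow> real"
  assumes "f differentiable (at z)" "g differentiable (at z)"
  shows "pd (\<lambda>w. f w * g w) u z = f z * pd g u z + pd f u z * g z"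
proof -
  have "((\<lambda>w. f w * g w) has_derivative (\<lambda>h. f z * frechet_derivative g (at z) h + frechet_derivative f (at z) h * g z)) (at z)"
    using assms by (auto intro!: derivative_eq_intros frechet_derivative_works[THEN iffD1])
  then show ?thesis unfolding pd_def using frechet_derivative_at by metis
qed

lemma schwarz_half:
  fixes f :: "'a::real_normed_vector \<Rightarrow> real"
  assumes h: "h > 0"
    and sq: "\<And>s t. 0 \<le> s \<Longrightarrow> s \<le> h \<Longrightarrow> 0 \<le> t \<Longrightarrow> t \<le> h \<Longrightarrow> z + s *\<^sub>R a + t *\<^sub>R b \<in> S"
    and d0: "\<And>w. w \<in> S \<Longrightarrow> f differentiable (at w)"
    and d1: "\<And>w. w \<in> S \<Longrightarrow> pd f a differentiable (at w)"
  shows "\<exists>s t. 0 < s \<and> s < h \<and> 0 < t \<and> t < h \<and>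
    f (z + h *\<^sub>R a + h *\<^sub>R b) - f (z + h *\<^sub>R a) - f (z + h *\<^sub>R b) + f z
      = h * h * pd (pd f a) b (z + s *\<^sub>R a + t *\<^sub>R b)"
proof -
  define g where "g s = f ((z + h *\<^sub>R b) + s *\<^sub>R a) - f (z + s *\<^sub>R a)" for s
  have "DERIV g s :> pd f a ((z + h *\<^sub>R b) + s *\<^sub>R a) - pd f a (z + s *\<^sub>R a)"
    if "0 \<le> s" "s \<le> h" for s
  proof -
    have m1: "z + h *\<^sub>R b + s *\<^sub>R a \<in> S" using sq[of s h] that h by (simp add: algebra_simps)
    have m2: "z + s *\<^sub>R a \<in> S" using sq[of s 0] that h by simp
    show ?thesis unfolding g_def
      by (intro DERIV_diff dir_deriv d0 m1 m2)
  qed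
  from MVT2[OF h this] obtain s where s: "0 < s" "s < h"
    and gs: "g h - g 0 = (h - 0) * (pd f a ((z + h *\<^sub>R b) + s *\<^sub>R a) - pd f a (z + s *\<^sub>R a))"
    by blast
  define k where "k t = pd f a ((z + s *\<^sub>R a) + t *\<^sub>R b)" for t
  have "DERIV k t :> pd (pd f a) b ((z + s *\<^sub>R a) + t *\<^sub>R b)" if "0 \<le> t" "t \<le> h" for t
    unfolding k_def by (intro dir_deriv d1) (use sq[of s t] that s in simp)
  from MVT2[OF h this] obtain t where t: "0 < t" "t < h"
    and kt: "k h - k 0 = (h - 0) * pd (pd f a) b ((z + s *\<^sub>R a) + t *\<^sub>R b)"
    by blast
  have "f (z + h *\<^sub>R a + h *\<^sub>R b) - f (z + h *\<^sub>R a) - f (z + h *\<^sub>R b) + f z = g h - g 0"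
    by (simp add: g_def algebra_simps)
  also have "\<dots> = h * (k h - k 0)" using gs by (simp add: k_def algebra_simps)
  also have "\<dots> = h * h * pd (pd f a) b (z + s *\<^sub>R a + t *\<^sub>R b)" using kt by simp
  finally show ?thesis using s t by blast
qed

lemma schwarz:
  fixes f :: "'a::real_normed_vector \<Rightarrow> real"
  assumes S: "open S" "z \<in> S"
    and d0: "\<And>w. w \<in> S \<Longrightarrow> f differentiable (at w)"
    and d1a: "\<And>w. w \<in> S \<Longrightarrow> pd f a differentiable (at w)"
    and d1b: "\<And>w. w \<in> S \<Longrightarrow> pd f b differentiable (at w)"
    and d2a: "pd (pd f a) b differentiable (at z)"
    and d2b: "pd (pd f b) a differentiable (at z)"
  shows "pd (pd f a) b z = pd (pd f b) a z"
proof (rule ccontr)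
  let ?F1 = "pd (pd f a) b" and ?F2 = "pd (pd f b) a"
  assume ne: "?F1 z \<noteq> ?F2 z"
  define e where "e = \<bar>?F1 z - ?F2 z\<bar> / 3"
  have e: "e > 0" using ne by (simp add: e_def)
  have c1: "isCont ?F1 z" using d2a differentiable_imp_continuous_within by blast
  have c2: "isCont ?F2 z" using d2b differentiable_imp_continuous_within by blast
  obtain d1 where d1: "d1 > 0" "\<And>w. dist w z < d1 \<Longrightarrow> dist (?F1 w) (?F1 z) < e"
    using c1 e unfolding continuous_at_eps_delta by blast
  obtain d2 where d2: "d2 > 0" "\<And>w. dist w z < d2 \<Longrightarrow> dist (?F2 w) (?F2 z) < e"
    using c2 e unfolding continuous_at_eps_delta by blast
  obtain r where r: "r > 0" "ball z r \<subseteq> S" using S open_contains_ball by blast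
  define m where "m = min d1 (min d2 r)"
  have m: "m > 0" using d1 d2 r by (simp add: m_def)
  define h where "h = m / (2 * (norm a + norm b + 1))"
  have pos: "0 < 2 * (norm a + norm b + 1)" by (smt (verit) norm_ge_zero)
  have h: "h > 0" using m pos unfolding h_def by (rule divide_pos_pos)
  have close: "dist (z + s *\<^sub>R a + t *\<^sub>R b) z < m" if "0 \<le> s" "s \<le> h" "0 \<le> t" "t \<le> h" for s t
  proof -
    have "dist (z + s *\<^sub>R a + t *\<^sub>R b) z = norm (s *\<^sub>R a + t *\<^sub>R b)"
      by (simp add: dist_norm)
    also have "\<dots> \<le> s * norm a + t * norm b"
      using norm_triangle_ineq[of "s *\<^sub>R a" "t *\<^sub>R b"] that by simp
    also have "\<dots> \<le> h * norm a + h * norm b"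
      using that by (intro add_mono mult_right_mono) auto
    also have "\<dots> < h * (2 * (norm a + norm b + 1))"
    proof -
      have "0 < norm a + norm b + 2" by (smt (verit) norm_ge_zero)
      then have "0 < h * (norm a + norm b + 2)" using h by simp
      then show ?thesis by (simp add: algebra_simps)
    qed
    also have "\<dots> = m" using pos by (simp add: h_def)
    finally show ?thesis .
  qed
  have sqa: "z + s *\<^sub>R a + t *\<^sub>R b \<in> S" if "0 \<le> s" "s \<le> h" "0 \<le> t" "t \<le> h" for s t
    using close[OF that] r unfolding m_def by (auto simp: dist_commute)
  have sqb: "z + s *\<^sub>R b + t *\<^sub>R a \<in> S" if "0 \<le> s" "s \<le> h" "0 \<le> t" "t \<le> h" for s t
    using sqa[of t s] that by (simp add: add_ac)
  obtain s1 t1 where st1: "0 < s1" "s1 < h" "0 < t1" "t1 < h"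
    and E1: "f (z + h *\<^sub>R a + h *\<^sub>R b) - f (z + h *\<^sub>R a) - f (z + h *\<^sub>R b) + f z
      = h * h * ?F1 (z + s1 *\<^sub>R a + t1 *\<^sub>R b)"
    using schwarz_half[OF h sqa d0 d1a] by blast
  obtain s2 t2 where st2: "0 < s2" "s2 < h" "0 < t2" "t2 < h"
    and E2: "f (z + h *\<^sub>R b + h *\<^sub>R a) - f (z + h *\<^sub>R b) - f (z + h *\<^sub>R a) + f z
      = h * h * ?F2 (z + s2 *\<^sub>R b + t2 *\<^sub>R a)"
    using schwarz_half[OF h sqb d0 d1b] by blast
  have "h * h * ?F1 (z + s1 *\<^sub>R a + t1 *\<^sub>R b) = h * h * ?F2 (z + s2 *\<^sub>R b + t2 *\<^sub>R a)"
    using E1 E2 by (simp add: algebra_simps)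
  then have eq: "?F1 (z + s1 *\<^sub>R a + t1 *\<^sub>R b) = ?F2 (z + t2 *\<^sub>R a + s2 *\<^sub>R b)"
    using h by (simp add: add_ac)
  have "dist (?F1 (z + s1 *\<^sub>R a + t1 *\<^sub>R b)) (?F1 z) < e"
    using d1(2) close[of s1 t1] st1 unfolding m_def by auto
  moreover have "dist (?F2 (z + t2 *\<^sub>R a + s2 *\<^sub>R b)) (?F2 z) < e"
    using d2(2) close[of t2 s2] st2 unfolding m_def by auto
  ultimately have "\<bar>?F1 z - ?F2 z\<bar> < 2 * e" using eq by (simp add: dist_real_def)
  then show False using e by (simp add: e_def)
qed

lemma vm_inner: "((x::real^'n) v* M) \<bullet> y = x \<bullet> (M *v y)"
  unfolding inner_vec_def vector_matrix_mult_def matrix_vector_mult_def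
  by (simp add: sum_distrib_left sum_distrib_right mult_ac) (rule sum.swap)

lemma mv_sym: "transpose M = M \<Longrightarrow> (M::real^'n^'n) *v y = y v* M"
  by (metis transpose_matrix_vector)

lemma vm_neg: "(- x) v* A = - ((x::real^'n) v* A)"
  by (simp add: vector_matrix_mult_def vec_eq_iff sum_negf)

definition Dv :: "real^'n^'n \<Rightarrow> 'n::finite pt \<Rightarrow> real^'n" where
  "Dv Nm X = snd X - fst X v* Nm"
definition J0 :: "real^'n^'n \<Rightarrow> real^'n^'n \<Rightarrow> real^'n^'n \<Rightarrow> 'n::finite pt \<Rightarrow> 'n pt" where
  "J0 Gl Gu Nm X = (- (Dv Nm X v* Gu), fst X v* Gl + (- (Dv Nm X v* Gu)) v* Nm)"
definition G0 :: "real^'n^'n \<Rightarrow> real^'n^'n \<Rightarrow> real^'n^'n \<Rightarrow> 'n::finite pt \<Rightarrow> 'n pt \<Rightarrow> real" where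
  "G0 Gl Gu Nm X Y = (fst X v* Gl) \<bullet> fst Y + (Dv Nm X v* Gu) \<bullet> Dv Nm Y"

lemma fst_J0: "fst (J0 Gl Gu Nm X) = - (Dv Nm X v* Gu)" by (simp add: J0_def)
lemma snd_J0: "snd (J0 Gl Gu Nm X) = fst X v* Gl + (- (Dv Nm X v* Gu)) v* Nm" by (simp add: J0_def)

lemma Dv_J0: "Dv Nm (J0 Gl Gu Nm X) = fst X v* Gl"
  by (simp add: Dv_def J0_def)

lemma abstract_props:
  fixes Gl Gu Nm :: "real^'n::finite^'n"
  assumes i1: "Gl ** Gu = mat 1" and i2: "Gu ** Gl = mat 1"
    and s1: "transpose Gl = Gl" and s2: "transpose Gu = Gu" and s3: "transpose Nm = Nm"
  shows "J0 Gl Gu Nm (J0 Gl Gu Nm X) = - X"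
    and "G0 Gl Gu Nm (J0 Gl Gu Nm X) (J0 Gl Gu Nm Y) = G0 Gl Gu Nm X Y"
    and "G0 Gl Gu Nm X (J0 Gl Gu Nm Y) = snd X \<bullet> fst Y - fst X \<bullet> snd Y"
proof -
  show "J0 Gl Gu Nm (J0 Gl Gu Nm X) = - X"
  proof -
    have f: "fst (J0 Gl Gu Nm (J0 Gl Gu Nm X)) = - fst X"
      by (simp add: fst_J0 Dv_J0 vector_matrix_mul_assoc i1)
    have "snd (J0 Gl Gu Nm (J0 Gl Gu Nm X)) = fst (J0 Gl Gu Nm X) v* Gl + fst (J0 Gl Gu Nm (J0 Gl Gu Nm X)) v* Nm"
      by (simp only: snd_J0 fst_J0)
    also have "\<dots> = - Dv Nm X + (- fst X) v* Nm"
      using f by (simp add: fst_J0 vm_neg vector_matrix_mul_assoc i2)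
    also have "\<dots> = - snd X" by (simp add: Dv_def vm_neg)
    finally show ?thesis using f by (simp add: prod_eq_iff)
  qed
  show "G0 Gl Gu Nm (J0 Gl Gu Nm X) (J0 Gl Gu Nm Y) = G0 Gl Gu Nm X Y"
  proof -
    have a: "((Dv Nm X v* Gu) v* Gl) \<bullet> (Dv Nm Y v* Gu) = (Dv Nm X v* Gu) \<bullet> Dv Nm Y"
      by (simp add: vector_matrix_mul_assoc i2 vm_inner inner_commute[of "Dv Nm X"] mv_sym[OF s2])
    have b: "((fst X v* Gl) v* Gu) \<bullet> (fst Y v* Gl) = (fst X v* Gl) \<bullet> fst Y"
      by (simp add: vector_matrix_mul_assoc i1 vm_inner inner_commute[of "fst X"] mv_sym[OF s1])
    show ?thesis unfolding G0_def Dv_J0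
      using a b by (simp add: fst_J0 vm_neg vector_matrix_mult_diff_rdistrib algebra_simps)
  qed
  show "G0 Gl Gu Nm X (J0 Gl Gu Nm Y) = snd X \<bullet> fst Y - fst X \<bullet> snd Y"
  proof -
    have a: "(fst X v* Gl) \<bullet> (Dv Nm Y v* Gu) = fst X \<bullet> Dv Nm Y"
      by (simp add: vm_inner mv_sym[OF s1] vector_matrix_mul_assoc i2)
    have b: "(Dv Nm X v* Gu) \<bullet> (fst Y v* Gl) = Dv Nm X \<bullet> fst Y"
      by (simp add: vm_inner mv_sym[OF s2] vector_matrix_mul_assoc i1)
    have c: "(fst X v* Nm) \<bullet> fst Y = fst X \<bullet> (fst Y v* Nm)"
      by (simp add: vm_inner mv_sym[OF s3])
    show ?thesis unfolding G0_def Dv_J0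
      using a b c by (simp add: fst_J0 vm_neg Dv_def inner_diff_left inner_diff_right algebra_simps)
  qed
qed

abbreviation "GlM K v \<alpha> \<beta> z \<equiv> (\<chi> i j. Glow K v \<alpha> \<beta> i j z)"
abbreviation "GuM K v \<alpha> \<beta> z \<equiv> (\<chi> i j. Gup K v \<alpha> \<beta> i j z)"
abbreviation "NM K z \<equiv> (\<chi> i j. NK K i j z)"

lemma sum_axis_vec: "(\<Sum>k\<in>UNIV. c k *\<^sub>R (axis k 1 :: real^'n::finite)) = (\<chi> k. c k)"
  by (simp add: vec_eq_iff axis_def if_distrib cong: if_cong)

lemma dpc_vec: "dpc K z X i = Dv (NM K z) X $ i"
  by (simp add: dpc_def Dv_def vector_matrix_mult_def mult.commute)

lemma Jmap_J0: "Jmap K v \<alpha> \<beta> z X = J0 (GlM K v \<alpha> \<beta> z) (GuM K v \<alpha> \<beta> z) (NM K z) X"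
proof -
  have f: "fst (Jmap K v \<alpha> \<beta> z X) = fst (J0 (GlM K v \<alpha> \<beta> z) (GuM K v \<alpha> \<beta> z) (NM K z) X)"
    by (simp add: Jmap_def J0_def fst_sum dpv_def deltav_def sum_axis_vec dpc_vec vec_eq_iff
        vector_matrix_mult_def sum_negf)
  have s: "snd (Jmap K v \<alpha> \<beta> z X) = snd (J0 (GlM K v \<alpha> \<beta> z) (GuM K v \<alpha> \<beta> z) (NM K z) X)"
    by (simp add: Jmap_def J0_def snd_sum dpv_def deltav_def dxc_def dpc_vec vec_eq_iff
        vector_matrix_mult_def sum_negf axis_def if_distrib sum_distrib_right mult_ac cong: if_cong)
  show ?thesis using f s by (simp add: prod_eq_iff)
qed

lemma dsum: "(\<Sum>i\<in>(UNIV::'n::finite set). \<Sum>j\<in>UNIV. M i j * x i * (y j::real)) = (\<Sum>j\<in>UNIV. y j * (\<Sum>i\<in>UNIV. M i j * x i))"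
  by (subst sum.swap) (simp add: sum_distrib_left mult_ac)

lemma Gmet_G0: "Gmet K v \<alpha> \<beta> z X Y = G0 (GlM K v \<alpha> \<beta> z) (GuM K v \<alpha> \<beta> z) (NM K z) X Y"
  unfolding Gmet_def G0_def dxc_def dpc_vec dsum
  by (simp add: inner_vec_def vector_matrix_mult_def mult_ac)

lemma inv_alg:
  fixes A g :: "real^'n::finite^'n" and p q :: "real^'n"
  assumes gA: "g ** A = mat 1" and sA: "transpose A = A" and q: "q = A *v p"
    and pq: "p \<bullet> q = 2 * t" and a: "\<alpha> \<noteq> 0" and b: "\<beta> \<noteq> 0" and d: "\<alpha> + 2 * t * c \<noteq> 0"
  shows "(\<chi> i j. g$i$j / \<beta> + c / (\<alpha> * \<beta>) * p$i * p$j) **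
         (\<chi> i j. \<beta> * A$i$j - c * \<beta> / (\<alpha> + 2 * t * c) * q$i * q$j) = mat 1"
proof -
  have S1: "(\<Sum>j\<in>UNIV. g$i$j * A$j$k) = mat 1 $ i $ k" for i k
    using gA by (simp add: matrix_matrix_mult_def vec_eq_iff)
  have S2: "(\<Sum>j\<in>UNIV. p$j * A$j$k) = q$k" for k
  proof -
    have "q$k = (\<Sum>j\<in>UNIV. A$k$j * p$j)" by (simp add: q matrix_vector_mult_def)
    also have "\<dots> = (\<Sum>j\<in>UNIV. transpose A$k$j * p$j)" using sA by simp
    finally show ?thesis by (simp add: transpose_def mult.commute)
  qed
  have S3: "(\<Sum>j\<in>UNIV. g$i$j * q$j) = p$i" for i
  proof -
    have "g *v q = p" by (simp add: q matrix_vector_mul_assoc gA)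
    then show ?thesis by (simp add: matrix_vector_mult_def vec_eq_iff)
  qed
  have S4: "(\<Sum>j\<in>UNIV. p$j * q$j) = 2 * t" using pq by (simp add: inner_vec_def)
  define D where "D = \<alpha> + 2 * t * c"
  have Dnz: "D \<noteq> 0" using d by (simp add: D_def)
  have key: "c / \<alpha> - c / D - c * c * 2 * t / (\<alpha> * D) = 0"
    using a d by (simp add: D_def field_simps)
  have entry: "(\<Sum>j\<in>UNIV. (g$i$j / \<beta> + c / (\<alpha> * \<beta>) * p$i * p$j) * (\<beta> * A$j$k - c * \<beta> / (\<alpha> + 2 * t * c) * q$j * q$k))
      = mat 1 $ i $ k" for i k
  proof -
    have "(\<Sum>j\<in>UNIV. (g$i$j / \<beta> + c / (\<alpha> * \<beta>) * p$i * p$j) * (\<beta> * A$j$k - c * \<beta> / D * q$j * q$k))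
      = (\<Sum>j\<in>UNIV. g$i$j * A$j$k - (c / D * q$k) * (g$i$j * q$j) + (c / \<alpha> * p$i) * (p$j * A$j$k)
           - (c * c / (\<alpha> * D) * p$i * q$k) * (p$j * q$j))"
      using a b Dnz by (intro sum.cong) (auto simp: field_simps)
    also have "\<dots> = mat 1 $ i $ k - (c / D * q$k) * p$i + (c / \<alpha> * p$i) * q$k - (c * c / (\<alpha> * D) * p$i * q$k) * (2 * t)"
      by (simp only: sum.distrib sum_subtractf sum_distrib_left[symmetric] S1 S2 S3 S4)
    also have "\<dots> = mat 1 $ i $ k + p$i * q$k * (c / \<alpha> - c / D - c * c * 2 * t / (\<alpha> * D))"
      by (simp add: algebra_simps)
    also have "\<dots> = mat 1 $ i $ k" using key by simp
    finally show "(\<Sum>j\<in>UNIV. (g$i$j / \<beta> + c / (\<alpha> * \<beta>) * p$i * p$j) * (\<beta> * A$j$k - c * \<beta> / (\<alpha> + 2 * t * c) * q$j * q$k))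
      = mat 1 $ i $ k" by (simp add: D_def)
  qed
  show ?thesis using entry[simplified] by (simp add: vec_eq_iff matrix_matrix_mult_def)
qed

lemma pd_cmult:
  fixes H :: "'a::real_normed_vector \<Rightarrow> real"
  assumes "H differentiable (at z)"
  shows "pd (\<lambda>w. c * H w) u z = c * pd H u z"
proof -
  have "((\<lambda>w. c * H w) has_derivative (\<lambda>h. c * frechet_derivative H (at z) h)) (at z)"
    using assms by (auto intro!: derivative_eq_intros frechet_derivative_works[THEN iffD1])
  then show ?thesis unfolding pd_def using frechet_derivative_at by metis
qed

lemma T0_open: "open U \<Longrightarrow> open (T0 U)"
proof -
  assume "open U"
  have "T0 U = U \<times> (UNIV - {0})" by (auto simp: T0_def)
  then show ?thesis using \<open>open U\<close> by (simp add: open_Times open_Diff)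
qed

lemma smooth_facts:
  assumes "cartan_structure U K" "w \<in> T0 U"
  shows "K differentiable (at w)" "pd K u differentiable (at w)" "pd (pd K u) u' differentiable (at w)"
proof -
  have sm: "smooth_on (T0 U) K" using assms by (simp add: cartan_structure_def)
  show "K differentiable (at w)" using sm assms(2) unfolding smooth_on_def
    by (metis iter_pd.simps(1))
  show "pd K u differentiable (at w)" using sm assms(2) unfolding smooth_on_def
    by (metis iter_pd.simps)
  show "pd (pd K u) u' differentiable (at w)" using sm assms(2) unfolding smooth_on_def
    by (metis iter_pd.simps)
qed

lemma ginv_formula:
  assumes cs: "cartan_structure U K" and z: "z \<in> T0 U"
  shows "ginvK K i j z = pd K (dpv i) z * pd K (dpv j) z + K z * pd (pd K (dpv j)) (dpv i) z"
proof -
  have op: "open (T0 U)" using cs unfolding cartan_structure_def by (intro T0_open) simp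
  have e1: "pd (\<lambda>w. (K w)^2) (dpv j) w = 2 * (K w * pd K (dpv j) w)" if "w \<in> T0 U" for w
  proof -
    have "pd (\<lambda>w. (K w)^2) (dpv j) w = pd (\<lambda>w. K w * K w) (dpv j) w"
      by (simp add: power2_eq_square)
    also have "\<dots> = K w * pd K (dpv j) w + pd K (dpv j) w * K w"
      by (rule pd_mult) (use smooth_facts[OF cs that] in auto)
    finally show ?thesis by simp
  qed
  have "ginvK K i j z = (1/2) * pd (\<lambda>w. 2 * (K w * pd K (dpv j) w)) (dpv i) z"
    unfolding ginvK_def using pd_local[OF op z e1] by simp
  also have "\<dots> = pd (\<lambda>w. K w * pd K (dpv j) w) (dpv i) z"
    by (subst pd_cmult) (auto intro!: differentiable_mult smooth_facts[OF cs z])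
  also have "\<dots> = K z * pd (pd K (dpv j)) (dpv i) z + pd K (dpv i) z * pd K (dpv j) z"
    by (rule pd_mult) (use smooth_facts[OF cs z] in auto)
  finally show ?thesis by simp
qed

lemma ginv_sym:
  assumes cs: "cartan_structure U K" and z: "z \<in> T0 U"
  shows "ginvK K i j z = ginvK K j i z"
proof -
  have op: "open (T0 U)" using cs unfolding cartan_structure_def by (intro T0_open) simp
  have "pd (pd K (dpv j)) (dpv i) z = pd (pd K (dpv i)) (dpv j) z"
    by (rule schwarz[OF op z]) (use smooth_facts[OF cs] z in auto)
  then show ?thesis using ginv_formula[OF cs z, of i j] ginv_formula[OF cs z, of j i] by simp
qed

lemma u_decomp: "((0::real^'n::finite), p) = (\<Sum>j\<in>UNIV. p $ j *\<^sub>R dpv j)"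
  by (simp add: prod_eq_iff fst_sum snd_sum dpv_def sum_axis_vec)

lemma euler:
  fixes K :: "'n::finite pt \<Rightarrow> real"
  assumes cs: "cartan_structure U K" and z: "z \<in> T0 U"
  shows "(\<Sum>i\<in>UNIV. snd z $ i * pup K i z) = (K z)^2"
proof -
  have op: "open (T0 U)" using cs unfolding cartan_structure_def by (intro T0_open) simp
  obtain x p where zp: "z = (x, p)" by (cases z)
  have x: "x \<in> U" and p: "p \<noteq> 0" using z zp by (auto simp: T0_def)
  define u where "u = ((0::real^'n), p)"
  have hom: "\<And>l. l > 0 \<Longrightarrow> K (x, l *\<^sub>R p) = l * K (x, p)"
    using cs x by (auto simp: cartan_structure_def)
  have ray: "K (z + t *\<^sub>R u) = (1 + t) * K z" if "t > -1" for t
  proof -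
    have "z + t *\<^sub>R u = (x, (1 + t) *\<^sub>R p)" by (simp add: zp u_def algebra_simps)
    then show ?thesis using hom[of "1+t"] that zp by simp
  qed
  have rayT: "z + t *\<^sub>R u \<in> T0 U" if "t > -1" for t
  proof -
    have "z + t *\<^sub>R u = (x, (1 + t) *\<^sub>R p)" by (simp add: zp u_def algebra_simps)
    then show ?thesis using that x p by (simp add: T0_def)
  qed
  have h2: "pd K u (z + t *\<^sub>R u) = K z" if t: "t > -1" for t
  proof (rule pd_unique)
    show "K differentiable (at (z + t *\<^sub>R u))" using smooth_facts[OF cs rayT[OF t]] by simp
    have "((\<lambda>r. (1 + t + r) * K z) has_real_derivative K z) (at 0)"
      by (auto intro!: derivative_eq_intros)
    moreover have "(1 + t + r) * K z = K (z + t *\<^sub>R u + r *\<^sub>R u)" if "r \<in> {-1-t<..}" for r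
      using ray[of "t + r"] that by (simp add: algebra_simps)
    ultimately show "((\<lambda>r. K (z + t *\<^sub>R u + r *\<^sub>R u)) has_real_derivative K z) (at 0)"
      using has_field_derivative_transform_within_open[of _ "K z" 0 "{-1-t<..}"] t by auto
  qed
  have h4: "pd K u z = K z" using h2[of 0] by simp
  have h3: "pd (pd K u) u z = 0"
  proof (rule pd_unique)
    show "pd K u differentiable (at z)" using smooth_facts[OF cs z] by simp
    show "((\<lambda>r. pd K u (z + r *\<^sub>R u)) has_real_derivative 0) (at 0)"
      by (rule has_field_derivative_transform_within_open[where f="\<lambda>r. K z" and S="{-1<..}"])
         (auto simp: h2)
  qed
  have L1: "(\<Sum>j\<in>UNIV. p $ j * pd K (dpv j) w) = pd K u w" if "w \<in> T0 U" for w
    unfolding u_def u_decomp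
    by (rule pd_linear[symmetric]) (use smooth_facts[OF cs that] in auto)
  have L2: "(\<Sum>j\<in>UNIV. p $ j * pd (pd K (dpv j)) e z) = pd (pd K u) e z" for e
  proof -
    have "(\<Sum>j\<in>UNIV. p $ j * pd (pd K (dpv j)) e z) = pd (\<lambda>w. \<Sum>j\<in>UNIV. p $ j * pd K (dpv j) w) e z"
      by (rule pd_sumfun[symmetric]) (use smooth_facts[OF cs z] in auto)
    also have "\<dots> = pd (pd K u) e z" by (rule pd_local[OF op z L1])
    finally show ?thesis .
  qed
  have pup: "pup K i z = pd K (dpv i) z * K z + K z * pd (pd K u) (dpv i) z" for i
  proof -
    have "pup K i z = (\<Sum>j\<in>UNIV. (pd K (dpv i) z * pd K (dpv j) z + K z * pd (pd K (dpv j)) (dpv i) z) * p $ j)"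
      unfolding pup_def using ginv_formula[OF cs z] zp by simp
    also have "\<dots> = pd K (dpv i) z * (\<Sum>j\<in>UNIV. p $ j * pd K (dpv j) z) + K z * (\<Sum>j\<in>UNIV. p $ j * pd (pd K (dpv j)) (dpv i) z)"
      by (simp add: sum.distrib sum_distrib_left algebra_simps)
    also have "\<dots> = pd K (dpv i) z * K z + K z * pd (pd K u) (dpv i) z"
      using L1[OF z] L2 h4 by simp
    finally show ?thesis .
  qed
  have "(\<Sum>i\<in>UNIV. snd z $ i * pup K i z) = (\<Sum>i\<in>UNIV. p $ i * pd K (dpv i) z) * K z + K z * (\<Sum>i\<in>UNIV. p $ i * pd (pd K u) (dpv i) z)"
    unfolding pup by (simp add: zp sum.distrib sum_distrib_left sum_distrib_right algebra_simps)
  also have "(\<Sum>i\<in>UNIV. p $ i * pd (pd K u) (dpv i) z) = pd (pd K u) u z"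
    unfolding u_def u_decomp
    by (rule pd_linear[symmetric]) (use smooth_facts[OF cs z] in auto)
  finally show ?thesis using L1[OF z] h3 h4 by (simp add: power2_eq_square)
qed

lemma point:
  fixes K :: "'n::finite pt \<Rightarrow> real"
  assumes cs: "cartan_structure U K" and z: "z \<in> T0 U"
  shows "transpose (\<chi> i j. ginvK K i j z) = (\<chi> i j. ginvK K i j z)"
    and "(\<chi> i j. gK K i j z) ** (\<chi> i j. ginvK K i j z) = mat 1"
    and "transpose (\<chi> i j. gK K i j z) = (\<chi> i j. gK K i j z)"
proof -
  define A where "A = (\<chi> i j. ginvK K i j z)"
  have sA: "transpose A = A" by (simp add: A_def transpose_def vec_eq_iff ginv_sym[OF cs z])
  then show "transpose (\<chi> i j. ginvK K i j z) = (\<chi> i j. ginvK K i j z)" by (simp add: A_def)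
  have ker: "\<forall>x. A *v x = 0 \<longrightarrow> x = 0"
  proof (intro allI impI, rule ccontr)
    fix x assume Ax: "A *v x = 0" and x: "x \<noteq> 0"
    have "(\<Sum>i\<in>UNIV. \<Sum>j\<in>UNIV. ginvK K i j z * x$i * x$j) > 0"
      using cs z x by (auto simp: cartan_structure_def)
    moreover have "(\<Sum>i\<in>UNIV. \<Sum>j\<in>UNIV. ginvK K i j z * x$i * x$j) = (\<Sum>i\<in>UNIV. x$i * (A *v x)$i)"
      by (simp add: A_def matrix_vector_mult_def sum_distrib_left mult_ac)
    ultimately show False using Ax by simp
  qed
  obtain B where BA: "B ** A = mat 1" using ker matrix_left_invertible_ker by blast
  then have AB: "A ** B = mat 1" using matrix_left_right_inverse by blast
  have inv: "A ** matrix_inv A = mat 1 \<and> matrix_inv A ** A = mat 1"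
    unfolding matrix_inv_def by (rule someI[of _ B]) (use AB BA in simp)
  have geq: "(\<chi> i j. gK K i j z) = matrix_inv A" by (simp add: gK_def vec_eq_iff A_def)
  show "(\<chi> i j. gK K i j z) ** (\<chi> i j. ginvK K i j z) = mat 1" using inv geq by (simp add: A_def)
  have "transpose (matrix_inv A) ** A = mat 1"
    using inv sA by (metis matrix_transpose_mul transpose_mat)
  then have "transpose (matrix_inv A) = matrix_inv A"
    by (metis inv matrix_mul_assoc matrix_mul_lid matrix_mul_rid)
  then show "transpose (\<chi> i j. gK K i j z) = (\<chi> i j. gK K i j z)" using geq by simp
qed

lemma gK_sym:
  fixes K :: "'n::finite pt \<Rightarrow> real"
  assumes cs: "cartan_structure U K" and z: "z \<in> T0 U"
  shows "gK K a b z = gK K b a z"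
proof -
  have "transpose (\<chi> i j. gK K i j z) $ b $ a = (\<chi> i j. gK K i j z) $ b $ a"
    using point(3)[OF cs z] by simp
  then show ?thesis by (simp add: transpose_def)
qed

lemma pd_gK_sym:
  fixes K :: "'n::finite pt \<Rightarrow> real"
  assumes cs: "cartan_structure U K" and z: "z \<in> T0 U"
  shows "pd (gK K a b) u z = pd (gK K b a) u z"
proof -
  have op: "open (T0 U)" using cs unfolding cartan_structure_def by (intro T0_open) simp
  show ?thesis by (rule pd_local[OF op z]) (rule gK_sym[OF cs])
qed

lemma NK_sym:
  fixes K :: "'n::finite pt \<Rightarrow> real"
  assumes cs: "cartan_structure U K" and z: "z \<in> T0 U"
  shows "NK K i j z = NK K j i z"
proof -
  have gam: "gam K h i j z = gam K h j i z" for h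
    unfolding gam_def
  proof (intro arg_cong[where f="\<lambda>x. (1/2) * x"] sum.cong refl)
    fix s
    have e1: "pd (gK K i s) (dxv j) z = pd (gK K s i) (dxv j) z" by (rule pd_gK_sym[OF cs z])
    have e2: "pd (gK K s j) (dxv i) z = pd (gK K j s) (dxv i) z" by (rule pd_gK_sym[OF cs z])
    have e3: "pd (gK K i j) (dxv s) z = pd (gK K j i) (dxv s) z" by (rule pd_gK_sym[OF cs z])
    show "ginvK K h s z * (pd (gK K i s) (dxv j) z + pd (gK K s j) (dxv i) z - pd (gK K i j) (dxv s) z) =
          ginvK K h s z * (pd (gK K j s) (dxv i) z + pd (gK K s i) (dxv j) z - pd (gK K j i) (dxv s) z)"
      unfolding e1 e2 e3 by simp
  qed
  show ?thesis unfolding NK_def gam0_def using gam pd_gK_sym[OF cs z, of i j] by simp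
qed

lemma main_point:
  fixes K :: "'n::finite pt \<Rightarrow> real"
  assumes cs: "cartan_structure U K" and z: "z \<in> T0 U"
    and a: "\<alpha> > 0" and b: "\<beta> > 0" and d: "\<alpha> + 2 * tauK K z * v (tauK K z) > 0"
  shows "GlM K v \<alpha> \<beta> z ** GuM K v \<alpha> \<beta> z = mat 1"
    and "GuM K v \<alpha> \<beta> z ** GlM K v \<alpha> \<beta> z = mat 1"
    and "transpose (GlM K v \<alpha> \<beta> z) = GlM K v \<alpha> \<beta> z"
    and "transpose (GuM K v \<alpha> \<beta> z) = GuM K v \<alpha> \<beta> z"
    and "transpose (NM K z) = NM K z"
proof -
  define A where "A = (\<chi> i j. ginvK K i j z)"
  define g where "g = (\<chi> i j. gK K i j z)"
  define p where "p = snd z"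
  define q where "q = (\<chi> i. pup K i z)"
  have q: "q = A *v p" by (simp add: q_def A_def p_def matrix_vector_mult_def pup_def)
  have pq: "p \<bullet> q = 2 * tauK K z"
    using euler[OF cs z] by (simp add: p_def q_def inner_vec_def tauK_def)
  have inv: "(\<chi> i j. g$i$j / \<beta> + v (tauK K z) / (\<alpha> * \<beta>) * p$i * p$j) **
         (\<chi> i j. \<beta> * A$i$j - v (tauK K z) * \<beta> / (\<alpha> + 2 * tauK K z * v (tauK K z)) * q$i * q$j) = mat 1"
    by (rule inv_alg[OF _ _ q pq]) (use point[OF cs z] a b d in \<open>auto simp: g_def A_def\<close>)
  have e1: "GlM K v \<alpha> \<beta> z = (\<chi> i j. g$i$j / \<beta> + v (tauK K z) / (\<alpha> * \<beta>) * p$i * p$j)"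
    by (simp add: vec_eq_iff Glow_def g_def p_def)
  have e2: "GuM K v \<alpha> \<beta> z = (\<chi> i j. \<beta> * A$i$j - v (tauK K z) * \<beta> / (\<alpha> + 2 * tauK K z * v (tauK K z)) * q$i * q$j)"
    by (simp add: vec_eq_iff Gup_def A_def q_def)
  show 1: "GlM K v \<alpha> \<beta> z ** GuM K v \<alpha> \<beta> z = mat 1" using inv e1 e2 by simp
  then show "GuM K v \<alpha> \<beta> z ** GlM K v \<alpha> \<beta> z = mat 1" using matrix_left_right_inverse by blast
  show "transpose (GlM K v \<alpha> \<beta> z) = GlM K v \<alpha> \<beta> z"
    using gK_sym[OF cs z] by (simp add: transpose_def vec_eq_iff Glow_def mult_ac)
  show "transpose (GuM K v \<alpha> \<beta> z) = GuM K v \<alpha> \<beta> z"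
    using ginv_sym[OF cs z] by (simp add: transpose_def vec_eq_iff Gup_def mult_ac)
  show "transpose (NM K z) = NM K z"
    using NK_sym[OF cs z] by (simp add: transpose_def vec_eq_iff)
qed

theorem mainTheorem1:
  fixes U :: "(real^'n::finite) set" and K :: "'n pt \<Rightarrow> real"
    and v :: "real \<Rightarrow> real" and \<alpha> \<beta> :: real
  assumes "cartan_structure U K"
    and "smooth_on_halfline v"
    and "\<alpha> > 0" and "\<beta> > 0"
    and "\<forall>z\<in>T0 U. \<alpha> + 2 * tauK K z * v (tauK K z) > 0"
  shows "\<forall>z\<in>T0 U.
      (\<forall>X. Jmap K v \<alpha> \<beta> z (Jmap K v \<alpha> \<beta> z X) = - X)
    \<and> (\<forall>X Y. Gmet K v \<alpha> \<beta> z (Jmap K v \<alpha> \<beta> z X) (Jmap K v \<alpha> \<beta> z Y) = Gmet K v \<alpha> \<beta> z X Y)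
    \<and> (\<forall>a b c. pd (\<lambda>w. theta K v \<alpha> \<beta> w b c) a z + pd (\<lambda>w. theta K v \<alpha> \<beta> w c a) b z
               + pd (\<lambda>w. theta K v \<alpha> \<beta> w a b) c z = 0)"
proof (intro ballI conjI allI)
  note cs = assms(1)
  have op: "open (T0 U)" using cs unfolding cartan_structure_def by (intro T0_open) simp
  have th: "theta K v \<alpha> \<beta> w X Y = snd X \<bullet> fst Y - fst X \<bullet> snd Y" if w: "w \<in> T0 U" for w X Y
    unfolding theta_def Gmet_G0 Jmap_J0
    using main_point[OF cs w assms(3,4)] assms(5) w by (intro abstract_props(3)) auto
  fix z assume z: "z \<in> T0 U"
  note mp = main_point[OF cs z assms(3,4)] assms(5) z
  show "Jmap K v \<alpha> \<beta> z (Jmap K v \<alpha> \<beta> z X) = - X" for X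
    unfolding Jmap_J0 using mp by (intro abstract_props(1)) auto
  show "Gmet K v \<alpha> \<beta> z (Jmap K v \<alpha> \<beta> z X) (Jmap K v \<alpha> \<beta> z Y) = Gmet K v \<alpha> \<beta> z X Y" for X Y
    unfolding Jmap_J0 Gmet_G0 using mp by (intro abstract_props(2)) auto
  show "pd (\<lambda>w. theta K v \<alpha> \<beta> w b c) a z + pd (\<lambda>w. theta K v \<alpha> \<beta> w c a) b z
               + pd (\<lambda>w. theta K v \<alpha> \<beta> w a b) c z = 0" for a b c
    using pd_const_local[OF op z th] by simp
qed

end
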